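(* Let $m\in\mathbb{N}$ be odd and write $m=2k+1$. Then the friendship graph $F_{\lfloor m/2\rfloor}=F_k$ is $\mathbb{Z}_m$-cordial.
   Context: Graphs are finite, simple and undirected. For $n\in\mathbb{N}$, the friendship graph $F_n$ is the union of $n$ copies of the triangle $C_3$ joined at a single common (central) vertex. For an abelian group $A$ and a graph $G=(V,E)$, a vertex labeling $\ell:V\to A$ induces an edge labeling $\ell(\{v_1,v_2\})=\ell(v_1)+\ell(v_2)$. Let $f_V(a)=|\{v\in V:\ell(v)=a\}|$ and $f_E(a)=|\{e\in E:\ell(e)=a\}|$. The labeling is $A$-cordial if $|f_V(a_1)-f_V(a_2)|\le 1$ and $|f_E(a_1)-f_E(a_2)|\le 1$ for all $a_1,a_2\in A$; $G$ is $A$-cordial if it admits an $A$-cordial labeling. *)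

theory Defs
  imports Main
begin

definition simple_graph :: "'a set \<Rightarrow> 'a set set \<Rightarrow> bool" where
  "simple_graph V E \<longleftrightarrow> finite V \<and> (\<forall>e\<in>E. e \<subseteq> V \<and> card e = 2)"

definition friendship_vertices :: "nat \<Rightarrow> nat set" where
  "friendship_vertices n = {0..2*n}"

definition friendship_edges :: "nat \<Rightarrow> nat set set" where
  "friendship_edges n =
     {{0, j} | j. j \<in> {1..2*n}} \<union> {{2*i - 1, 2*i} | i. i \<in> {1..n}}"

text \<open>The cyclic group Z_m is represented by the residues {0..<m} with
  addition modulo m. A vertex labeling l induces the edge label
  l(v1) + l(v2) mod m on the edge {v1,v2}.\<close>

definition edge_label :: "nat \<Rightarrow> ('a \<Rightarrow> nat) \<Rightarrow> 'a set \<Rightarrow> nat" where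
  "edge_label m l e = (\<Sum>v\<in>e. l v) mod m"

definition vcount :: "'a set \<Rightarrow> ('a \<Rightarrow> nat) \<Rightarrow> nat \<Rightarrow> nat" where
  "vcount V l a = card {v \<in> V. l v = a}"

definition ecount :: "nat \<Rightarrow> 'a set set \<Rightarrow> ('a \<Rightarrow> nat) \<Rightarrow> nat \<Rightarrow> nat" where
  "ecount m E l a = card {e \<in> E. edge_label m l e = a}"

definition Zm_cordial_labeling :: "nat \<Rightarrow> 'a set \<Rightarrow> 'a set set \<Rightarrow> ('a \<Rightarrow> nat) \<Rightarrow> bool" where
  "Zm_cordial_labeling m V E l \<longleftrightarrow>
     (\<forall>v\<in>V. l v < m) \<and>
     (\<forall>a1<m. \<forall>a2<m. vcount V l a1 \<le> vcount V l a2 + 1) \<and>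
     (\<forall>a1<m. \<forall>a2<m. ecount m E l a1 \<le> ecount m E l a2 + 1)"

definition Zm_cordial :: "nat \<Rightarrow> 'a set \<Rightarrow> 'a set set \<Rightarrow> bool" where
  "Zm_cordial m V E \<longleftrightarrow> (\<exists>l. Zm_cordial_labeling m V E l)"

end

theory Submission imports Defs begin

lemma edges_eq:
  "friendship_edges k = (\<lambda>j. {0,j}) ` {1..2*k} \<union> (\<lambda>i. {2*i-1, 2*i}) ` {1..k}"
  unfolding friendship_edges_def by auto

lemma card_one_bij:
  assumes "bij_betw l A B" "a \<in> B"
  shows "card {v\<in>A. l v = a} = 1"
proof -
  obtain v where v: "v \<in> A" "l v = a" using assms by (auto simp: bij_betw_def)
  have "{v\<in>A. l v = a} = {v}" using v assms(1) by (auto simp: bij_betw_def inj_on_def)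
  thus ?thesis by simp
qed

lemma card_zero_bij:
  assumes "bij_betw l A B" "a \<notin> B"
  shows "card {v\<in>A. l v = a} = 0"
proof -
  have "{v\<in>A. l v = a} = {}" using assms by (auto simp: bij_betw_def)
  thus ?thesis by (simp only: card.empty)
qed

lemma main:
  fixes l :: "nat \<Rightarrow> nat"
  assumes k1: "k \<ge> 1" and mk: "m = 2*k+1" and l0: "l 0 = 0"
    and bij: "bij_betw l {1..2*k} {1..2*k}"
    and h0: "card {i\<in>{1..k}. (l(2*i-1)+l(2*i)) mod m = 0} \<in> {1,2}"
    and h1: "\<And>a. a \<noteq> 0 \<Longrightarrow> card {i\<in>{1..k}. (l(2*i-1)+l(2*i)) mod m = a} \<le> 1"
  shows "Zm_cordial_labeling m {0..2*k} (friendship_edges k) l"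
proof -
  have bijV: "bij_betw l {0..2*k} {0..<m}"
  proof -
    have "{0..2*k} = insert 0 {1..2*k}" by auto
    moreover have "{0..<m} = insert 0 {1..2*k}" using mk by auto
    moreover have "inj_on l (insert 0 {1..2*k})" using bij l0
      by (auto simp: bij_betw_def inj_on_insert)
    moreover have "l ` (insert 0 {1..2*k}) = insert 0 {1..2*k}" using bij l0
      by (auto simp: bij_betw_def)
    ultimately show ?thesis by (simp add: bij_betw_def)
  qed
  have vc: "vcount {0..2*k} l a = 1" if "a < m" for a
    unfolding vcount_def using card_one_bij[OF bijV] that by simp
  have lt: "\<forall>v\<in>{0..2*k}. l v < m" using bijV by (auto simp: bij_betw_def)
  define t where "t i = (l(2*i-1)+l(2*i)) mod m" for i
  have S: "card {e \<in> (\<lambda>j. {0,j}) ` {1..2*k}. edge_label m l e = a} = (if a \<in> {1..2*k} then 1 else 0)" for a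
  proof -
    have "{e \<in> (\<lambda>j. {0,j}) ` {1..2*k}. edge_label m l e = a} = (\<lambda>j. {0,j}) ` {j\<in>{1..2*k}. l j = a}"
    proof -
      have "edge_label m l {0,j} = l j" if "j \<in> {1..2*k}" for j
        using that lt l0 by (auto simp: edge_label_def)
      thus ?thesis by force
    qed
    moreover have "inj_on (\<lambda>j. {0::nat,j}) {j\<in>{1..2*k}. l j = a}"
      by (auto simp: inj_on_def doubleton_eq_iff)
    ultimately have "card {e \<in> (\<lambda>j. {0,j}) ` {1..2*k}. edge_label m l e = a} = card {j\<in>{1..2*k}. l j = a}"
      by (simp add: card_image)
    thus ?thesis using card_one_bij[OF bij] card_zero_bij[OF bij] by auto
  qed
  have T: "card {e \<in> (\<lambda>i. {2*i-1, 2*i}) ` {1..k}. edge_label m l e = a} = card {i\<in>{1..k}. t i = a}" for a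
  proof -
    have "{e \<in> (\<lambda>i. {2*i-1, 2*i}) ` {1..k}. edge_label m l e = a} = (\<lambda>i. {2*i-1, 2*i}) ` {i\<in>{1..k}. t i = a}"
    proof -
      have "edge_label m l {2*i-1, 2*i} = t i" if "i \<in> {1..k}" for i
        using that by (auto simp: edge_label_def t_def)
      thus ?thesis by force
    qed
    moreover have "inj_on (\<lambda>i. {2*i-1, 2*i::nat}) {i\<in>{1..k}. t i = a}"
      by (auto simp: inj_on_def doubleton_eq_iff)
    ultimately show ?thesis by (simp add: card_image)
  qed
  have ec: "ecount m (friendship_edges k) l a = (if a \<in> {1..2*k} then 1 else 0) + card {i\<in>{1..k}. t i = a}" for a
  proof -
    have "{e \<in> friendship_edges k. edge_label m l e = a} =
      {e \<in> (\<lambda>j. {0,j}) ` {1..2*k}. edge_label m l e = a} \<union> {e \<in> (\<lambda>i. {2*i-1, 2*i}) ` {1..k}. edge_label m l e = a}"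
      unfolding edges_eq by auto
    moreover have "{e \<in> (\<lambda>j. {0,j}) ` {1..2*k}. edge_label m l e = a} \<inter> {e \<in> (\<lambda>i. {2*i-1, 2*i}) ` {1..k}. edge_label m l e = a} = {}"
    proof -
      have "{0::nat,x} \<noteq> {2*i-1, 2*i}" if "i \<in> {1..k}" for x i
      proof
        assume "{0::nat,x} = {2*i-1, 2*i}"
        hence "0 \<in> {2*i-1, 2*i}" by blast
        thus False using that by auto
      qed
      thus ?thesis by blast
    qed
    ultimately have "ecount m (friendship_edges k) l a = card {e \<in> (\<lambda>j. {0,j}) ` {1..2*k}. edge_label m l e = a} + card {e \<in> (\<lambda>i. {2*i-1, 2*i}) ` {1..k}. edge_label m l e = a}"
      unfolding ecount_def by (simp add: card_Un_disjoint)
    thus ?thesis using S[of a] T[of a] by presburger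
  qed
  have ec2: "1 \<le> ecount m (friendship_edges k) l a \<and> ecount m (friendship_edges k) l a \<le> 2" if "a < m" for a
  proof (cases "a = 0")
    case True
    then show ?thesis using h0 ec[of 0] unfolding t_def by auto
  next
    case False
    then show ?thesis using h1[OF False] ec[of a] that mk unfolding t_def by auto
  qed
  show ?thesis unfolding Zm_cordial_labeling_def
  proof (intro conjI allI impI)
    show "\<forall>v\<in>{0..2*k}. l v < m" by (rule lt)
  next
    fix a1 a2 assume "a1 < m" "a2 < m"
    thus "vcount {0..2*k} l a1 \<le> vcount {0..2*k} l a2 + 1" using vc by simp
  next
    fix a1 a2 assume "a1 < m" "a2 < m"
    thus "ecount m (friendship_edges k) l a1 \<le> ecount m (friendship_edges k) l a2 + 1"
      using ec2[of a1] ec2[of a2] by linarith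
  qed
qed

lemma mod_lt2: "(x::nat) < 2*m \<Longrightarrow> x mod m = (if x < m then x else x - m)"
  by (metis le_mod_geq mod_less mult_2 not_less le_add_diff_inverse mod_add_self2 less_diff_conv2 add_diff_cancel_left')

lemma inj4:
  fixes m k i j :: nat
  assumes "m = 2*k+1" "1 \<le> i" "i \<le> k" "1 \<le> j" "j \<le> k"
    and "(4*i-1) mod m = (4*j-1) mod m"
  shows "i = j"
proof -
  have a: "4*i-1 < 2*m" "4*j-1 < 2*m" using assms by auto
  show ?thesis using assms(6) unfolding mod_lt2[OF a(1)] mod_lt2[OF a(2)]
    using assms(1-5) by (auto split: if_splits) presburger+
qed

lemma card_le1:
  assumes "\<And>i j. i \<in> A \<Longrightarrow> j \<in> A \<Longrightarrow> i = j" "finite A"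
  shows "card A \<le> 1"
  using assms card_le_Suc0_iff_eq[of A] by (simp add: One_nat_def)

lemma odd_case:
  assumes "k \<ge> 1" "odd k" "m = 2*k+1"
  shows "Zm_cordial_labeling m {0..2*k} (friendship_edges k) id"
proof (rule main[OF assms(1,3)])
  show "id 0 = 0" by simp
  show "bij_betw id {1..2*k} {1..2*k}" by simp
  have e: "(id(2*i-1)+id(2*i)) mod m = (4*i-1) mod m" if "i \<ge> 1" for i
    using that by simp
  show "card {i\<in>{1..k}. (id(2*i-1)+id(2*i)) mod m = a} \<le> 1" for a
    by (rule card_le1) (use inj4[OF assms(3)] e in auto)
  obtain c where c: "k = 2*c+1" using assms(2) oddE by blast
  have "{i\<in>{1..k}. (id(2*i-1)+id(2*i)) mod m = 0} = {c+1}"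
  proof
    have "4*(c+1)-1 = m" using c assms(3) by simp
    hence z: "(4*(c+1)-1) mod m = 0" by simp
    have "id(2*(c+1)-1)+id(2*(c+1)) = m" using c assms(3) by simp
    thus "{c+1} \<subseteq> {i\<in>{1..k}. (id(2*i-1)+id(2*i)) mod m = 0}"
      using c by simp
    show "{i\<in>{1..k}. (id(2*i-1)+id(2*i)) mod m = 0} \<subseteq> {c+1}"
    proof
      fix i assume "i \<in> {i\<in>{1..k}. (id(2*i-1)+id(2*i)) mod m = 0}"
      hence "i \<in> {1..k}" "(4*i-1) mod m = (4*(c+1)-1) mod m" using e z by auto
      thus "i \<in> {c+1}" using inj4[OF assms(3), of i "c+1"] c by auto
    qed
  qed
  thus "card {i\<in>{1..k}. (id(2*i-1)+id(2*i)) mod m = 0} \<in> {1,2}" by simp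
qed

lemma even_case:
  assumes "k \<ge> 2" "even k" "m = 2*k+1"
  shows "Zm_cordial_labeling m {0..2*k} (friendship_edges k) (id(2:=2*k, 2*k:=2))"
    (is "Zm_cordial_labeling _ _ _ ?l")
proof (rule main)
  show "1 \<le> k" "m = 2*k+1" using assms by auto
  show "?l 0 = 0" using assms by simp
  have "inj_on ?l {1..2*k}" by (auto simp: inj_on_def)
  moreover have "?l ` {1..2*k} \<subseteq> {1..2*k}" using assms by auto
  ultimately have "?l ` {1..2*k} = {1..2*k}" by (intro endo_inj_surj) auto
  thus "bij_betw ?l {1..2*k} {1..2*k}" using \<open>inj_on ?l {1..2*k}\<close>
    by (simp add: bij_betw_def)
  have e1: "(?l(2*1-1)+?l(2*1)) mod m = 0" using assms by simp
  have ek: "(?l(2*k-1)+?l(2*k)) mod m = 0" using assms by simp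
  have em: "(?l(2*i-1)+?l(2*i)) mod m = (4*i-1) mod m" if "2 \<le> i" "i < k" for i
    using that by simp
  have nz: "(4*i-1) mod m \<noteq> 0" if "2 \<le> i" "i < k" for i
  proof -
    have a: "4*i-1 < 2*m" using that assms by auto
    show ?thesis unfolding mod_lt2[OF a] using that assms by auto presburger
  qed
  have "{i\<in>{1..k}. (?l(2*i-1)+?l(2*i)) mod m = 0} = {1,k}"
  proof
    show "{1,k} \<subseteq> {i\<in>{1..k}. (?l(2*i-1)+?l(2*i)) mod m = 0}"
      using e1 ek assms by auto
    show "{i\<in>{1..k}. (?l(2*i-1)+?l(2*i)) mod m = 0} \<subseteq> {1,k}"
    proof
      fix i assume i: "i \<in> {i\<in>{1..k}. (?l(2*i-1)+?l(2*i)) mod m = 0}"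
      show "i \<in> {1,k}"
      proof (rule ccontr)
        assume "i \<notin> {1,k}"
        hence ik: "2 \<le> i" "i < k" using i by auto
        have "(?l(2*i-1)+?l(2*i)) mod m = 0" using i by blast
        thus False using em[OF ik] nz[OF ik] by simp
      qed
    qed
  qed
  thus "card {i\<in>{1..k}. (?l(2*i-1)+?l(2*i)) mod m = 0} \<in> {1,2}" using assms by simp
  show "card {i\<in>{1..k}. (?l(2*i-1)+?l(2*i)) mod m = a} \<le> 1" if "a \<noteq> 0" for a
  proof (rule card_le1)
    show "finite {i\<in>{1..k}. (?l(2*i-1)+?l(2*i)) mod m = a}" by simp
    fix i j assume i: "i \<in> {i\<in>{1..k}. (?l(2*i-1)+?l(2*i)) mod m = a}"
      and j: "j \<in> {i\<in>{1..k}. (?l(2*i-1)+?l(2*i)) mod m = a}"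
    have ai: "(?l(2*i-1)+?l(2*i)) mod m = a" using i by blast
    have aj: "(?l(2*j-1)+?l(2*j)) mod m = a" using j by blast
    have "i \<noteq> 1 \<and> i \<noteq> k" using ai e1 ek that by metis
    moreover have "j \<noteq> 1 \<and> j \<noteq> k" using aj e1 ek that by metis
    ultimately have "2 \<le> i" "i < k" "2 \<le> j" "j < k" using i j by auto
    thus "i = j" using ai aj em inj4[OF assms(3), of i j] by simp
  qed
qed

theorem theorem11p1:
  fixes m k :: nat
  assumes "odd m" and "m = 2 * k + 1"
  shows "Zm_cordial m (friendship_vertices (m div 2)) (friendship_edges (m div 2))"
proof -
  have md: "m div 2 = k" using assms(2) by simp
  show ?thesis unfolding md friendship_vertices_def Zm_cordial_def
  proof (cases "k = 0")
    case True
    have "Zm_cordial_labeling m {0..2*k} (friendship_edges k) (\<lambda>_. 0)"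
      using True assms(2) unfolding Zm_cordial_labeling_def friendship_edges_def ecount_def vcount_def
      by auto
    thus "\<exists>l. Zm_cordial_labeling m {0..2*k} (friendship_edges k) l" by blast
  next
    case False
    show "\<exists>l. Zm_cordial_labeling m {0..2*k} (friendship_edges k) l"
    proof (cases "even k")
      case True
      hence "k \<ge> 2" using False by presburger
      thus ?thesis using even_case True assms(2) by blast
    next
      case odd: False
      thus ?thesis using odd_case odd False assms(2) by (metis less_one not_less)
    qed
  qed
qed

end
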